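(* Fix $\alpha,\beta\in(0,1)$ and $c>0$. There exist constants $K,c_1,c_2>0$ depending only on $\alpha,\beta,c$ such that the following holds for the decoupled process with parameters $(G,r,T,\alpha,\beta)$ at any time $t>0$. Let $u,v$ be nodes with $d_G(r,u),d_G(r,v)\le t$, let $w$ be their least common ancestor in $T$ (a common ancestor, possibly $u$ or $v$ itself, of maximal depth), $D=d_T(r,w)$, and $\delta=\max\{d_T(w,u),d_T(w,v)\}$. If $\delta>\beta(t-D)+K(t-D)^{0.5+c}$, then $$\Pr[\mathrm{origin}_t(u)=\mathrm{origin}_t(v)]\le e^{-c_1(t-D)^{c_2}}.$$
   Context: Decoupled process. Fix $\alpha,\beta\in[0,1]$, a connected locally finite undirected graph $G$, root $r$, and a BFS spanning tree $T$ of $G$ rooted at $r$ ($d_T(r,v)=d_G(r,v)$), oriented away from $r$, with parent map $p$. Let $Z_0=+1$, $Z_1,Z_2,\dots$ i.i.d. uniform on $\{-1,+1\}$, $Z_\infty=\bot$. Counter $\mathrm{count}_0=1$; $\mathrm{origin}_0(r)=0$ (and always $0$), $\mathrm{origin}_0(v)=\infty$ for $v\ne r$; $g_t(v)=Z_{\mathrm{origin}_t(v)}$. Update from $t$ to $t+1$ (independent choices): if $g_t(v)=g_t(p(v))=\bot$ then $\mathrm{origin}_{t+1}(v)=\infty$; nodes with $g_t(v)=\bot\ne g_t(p(v))$ are processed sequentially in a fixed order: w.p. $1-\alpha$, $\mathrm{origin}_{t+1}(v)=\mathrm{origin}_t(p(v))$; w.p. $\alpha$, $\mathrm{origin}_{t+1}(v)$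 is the current counter value and the counter is then incremented; if $g_t(v)\ne\bot$, $v\ne r$: w.p. $\beta$, $\mathrm{origin}_{t+1}(v)=\mathrm{origin}_t(p(v))$, otherwise unchanged. Nodes $u,v$ are in the same run at time $t$ iff $\mathrm{origin}_t(u)=\mathrm{origin}_t(v)$. *)

theory Defs
  imports "HOL-Probability.Probability"
begin

definition ugraph :: "nat set \<Rightarrow> (nat \<Rightarrow> nat \<Rightarrow> bool) \<Rightarrow> bool" where
  "ugraph V E \<longleftrightarrow> (\<forall>x y. E x y \<longrightarrow> x \<in> V \<and> y \<in> V \<and> E y x \<and> x \<noteq> y)"

definition locally_finite :: "nat set \<Rightarrow> (nat \<Rightarrow> nat \<Rightarrow> bool) \<Rightarrow> bool" where
  "locally_finite V E \<longleftrightarrow> (\<forall>x\<in>V. finite {y. E x y})"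

definition gwalk :: "(nat \<Rightarrow> nat \<Rightarrow> bool) \<Rightarrow> nat \<Rightarrow> nat \<Rightarrow> nat \<Rightarrow> bool" where
  "gwalk E n x y \<longleftrightarrow> (\<exists>f. f 0 = x \<and> f n = y \<and> (\<forall>i<n. E (f i) (f (Suc i))))"

definition gconnected :: "nat set \<Rightarrow> (nat \<Rightarrow> nat \<Rightarrow> bool) \<Rightarrow> bool" where
  "gconnected V E \<longleftrightarrow> V \<noteq> {} \<and> (\<forall>x\<in>V. \<forall>y\<in>V. \<exists>n. gwalk E n x y)"

definition gdist :: "(nat \<Rightarrow> nat \<Rightarrow> bool) \<Rightarrow> nat \<Rightarrow> nat \<Rightarrow> nat" where
  "gdist E x y = (LEAST n. gwalk E n x y)"

definition tdepth :: "(nat \<Rightarrow> nat) \<Rightarrow> nat \<Rightarrow> nat \<Rightarrow> nat" where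
  "tdepth p r v = (LEAST k. (p ^^ k) v = r)"

definition tanc :: "(nat \<Rightarrow> nat) \<Rightarrow> nat \<Rightarrow> nat \<Rightarrow> nat \<Rightarrow> bool" where
  "tanc p r a x \<longleftrightarrow> (\<exists>k\<le>tdepth p r x. (p ^^ k) x = a)"

definition bfs_tree :: "nat set \<Rightarrow> (nat \<Rightarrow> nat \<Rightarrow> bool) \<Rightarrow> nat \<Rightarrow> (nat \<Rightarrow> nat) \<Rightarrow> bool" where
  "bfs_tree V E r p \<longleftrightarrow> r \<in> V
     \<and> (\<forall>v\<in>V. v \<noteq> r \<longrightarrow> p v \<in> V \<and> E (p v) v)
     \<and> (\<forall>v\<in>V. \<exists>k. (p ^^ k) v = r)
     \<and> (\<forall>v\<in>V. tdepth p r v = gdist E r v)"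

text \<open>Randomness: for each time t and node v an independent pair of coins
  (a, b) with a ~ Bernoulli(alpha), b ~ Bernoulli(beta). Coin a decides "fresh origin"
  (probability alpha) for a bottom node with non-bottom parent; coin b decides
  "copy parent's origin" (probability beta) for a non-bottom non-root node.
  origin = None encodes infinity (g = bottom); the Z values are irrelevant for origins.\<close>
definition coin_space :: "real \<Rightarrow> real \<Rightarrow> (nat \<times> nat \<Rightarrow> bool \<times> bool) measure" where
  "coin_space \<alpha> \<beta> = PiM UNIV (\<lambda>_. measure_pmf (pair_pmf (bernoulli_pmf \<alpha>) (bernoulli_pmf \<beta>)))"

text \<open>One step from time t to t+1. State = (origin map, counter). Fresh origins are
  handed out in the fixed processing order given by rk.\<close>
definition dstep :: "nat set \<Rightarrow> nat \<Rightarrow> (nat \<Rightarrow> nat) \<Rightarrow> (nat \<Rightarrow> nat) \<Rightarrow> (nat \<Rightarrow> bool \<times> bool)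
     \<Rightarrow> (nat \<Rightarrow> nat option) \<times> nat \<Rightarrow> (nat \<Rightarrow> nat option) \<times> nat" where
  "dstep V r p rk co st =
    (let orig = fst st; cnt = snd st;
         N = {v \<in> V. v \<noteq> r \<and> orig v = None \<and> orig (p v) \<noteq> None \<and> fst (co v)}
     in ((\<lambda>v. if v \<notin> V then None
              else if v = r then Some 0
              else if orig v = None then
                (if orig (p v) = None then None
                 else if fst (co v) then Some (cnt + card {w \<in> N. rk w < rk v})
                 else orig (p v))
              else (if snd (co v) then orig (p v) else orig v)),
         cnt + card N))"

primrec dproc :: "nat set \<Rightarrow> nat \<Rightarrow> (nat \<Rightarrow> nat) \<Rightarrow> (nat \<Rightarrow> nat) \<Rightarrow> (nat \<times> nat \<Rightarrow> bool \<times> bool)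
     \<Rightarrow> nat \<Rightarrow> (nat \<Rightarrow> nat option) \<times> nat" where
  "dproc V r p rk \<omega> 0 = ((\<lambda>v. if v = r then Some 0 else None), 1)"
| "dproc V r p rk \<omega> (Suc t) = dstep V r p rk (\<lambda>x. \<omega> (t, x)) (dproc V r p rk \<omega> t)"

definition origin :: "nat set \<Rightarrow> nat \<Rightarrow> (nat \<Rightarrow> nat) \<Rightarrow> (nat \<Rightarrow> nat) \<Rightarrow> (nat \<times> nat \<Rightarrow> bool \<times> bool)
     \<Rightarrow> nat \<Rightarrow> nat \<Rightarrow> nat option" where
  "origin V r p rk \<omega> t v = fst (dproc V r p rk \<omega> t) v"

end

theory Submission
  imports Defs
begin


lemma depth_r: "tdepth p r r = 0"
  unfolding tdepth_def by (rule Least_eq_0) simp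

context
  fixes V :: "nat set" and E r p
  assumes bfs: "bfs_tree V E r p"
begin

lemma r_in: "r \<in> V" using bfs by (simp add: bfs_tree_def)

lemma reach: "y \<in> V \<Longrightarrow> (p ^^ tdepth p r y) y = r"
  unfolding tdepth_def using bfs by (auto simp: bfs_tree_def intro: LeastI_ex)

lemma depth0: "y \<in> V \<Longrightarrow> tdepth p r y = 0 \<Longrightarrow> y = r"
  using reach[of y] by simp

lemma par_in: "y \<in> V \<Longrightarrow> y \<noteq> r \<Longrightarrow> p y \<in> V \<and> E (p y) y"
  using bfs by (simp add: bfs_tree_def)

lemma depth_par: assumes "y \<in> V" "y \<noteq> r"
  shows "tdepth p r (p y) = tdepth p r y - 1" "tdepth p r y \<ge> 1"
proof -
  have d1: "tdepth p r y \<ge> 1" using depth0 assms by fastforce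
  have "(p ^^ (tdepth p r y - 1)) (p y) = r"
    using reach[OF assms(1)] d1 by (metis Suc_diff_le diff_Suc_1 funpow_Suc_right o_apply)
  hence le: "tdepth p r (p y) \<le> tdepth p r y - 1" unfolding tdepth_def by (rule Least_le)
  have "(p ^^ Suc (tdepth p r (p y))) y = r"
    using reach[of "p y"] par_in[OF assms] by (simp add: funpow_Suc_right del: funpow.simps)
  hence "tdepth p r y \<le> Suc (tdepth p r (p y))" unfolding tdepth_def by (rule Least_le)
  thus "tdepth p r (p y) = tdepth p r y - 1" using le d1 by linarith
  show "tdepth p r y \<ge> 1" by fact
qed

lemma tanc_refl: "tanc p r x x"
  unfolding tanc_def by (rule exI[of _ 0]) simp

lemma tanc_par: assumes "y \<in> V" "y \<noteq> r" "tanc p r a (p y)" shows "tanc p r a y"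
proof -
  obtain k where k: "k \<le> tdepth p r (p y)" "(p ^^ k) (p y) = a" using assms(3) unfolding tanc_def by auto
  have "Suc k \<le> tdepth p r y" using k(1) depth_par[OF assms(1,2)] by linarith
  moreover have "(p ^^ Suc k) y = a" using k(2) by (simp add: funpow_Suc_right del: funpow.simps)
  ultimately show ?thesis unfolding tanc_def by blast
qed

lemma tanc_depth: assumes "x \<in> V" "tanc p r a x" shows "tdepth p r a \<le> tdepth p r x"
proof -
  obtain k where k: "k \<le> tdepth p r x" "(p ^^ k) x = a" using assms(2) unfolding tanc_def by auto
  have "(p ^^ (tdepth p r x - k)) a = r"
    using reach[OF assms(1)] k by (metis funpow_add le_add_diff_inverse2 o_apply)
  hence "tdepth p r a \<le> tdepth p r x - k" unfolding tdepth_def by (rule Least_le)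
  thus ?thesis by linarith
qed

lemma depth_gdist: "y \<in> V \<Longrightarrow> tdepth p r y = gdist E r y"
  using bfs by (simp add: bfs_tree_def)

lemma level_finite:
  assumes lf: "locally_finite V E"
  shows "finite {y \<in> V. tdepth p r y = k}"
proof (induction k)
  case 0
  have "{y \<in> V. tdepth p r y = 0} \<subseteq> {r}" using depth0 by auto
  thus ?case using finite_subset by blast
next
  case (Suc k)
  have "{y \<in> V. tdepth p r y = Suc k} \<subseteq> (\<Union>x\<in>{y \<in> V. tdepth p r y = k}. {y. E x y})"
  proof
    fix y assume y: "y \<in> {y \<in> V. tdepth p r y = Suc k}"
    hence yr: "y \<noteq> r" using depth_r by auto
    show "y \<in> (\<Union>x\<in>{y \<in> V. tdepth p r y = k}. {y. E x y})"
      using y par_in[OF _ yr] depth_par[OF _ yr] by (intro UN_I[of "p y"]) auto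
  qed
  moreover have "finite (\<Union>x\<in>{y \<in> V. tdepth p r y = k}. {y. E x y})"
    using Suc lf unfolding locally_finite_def by auto
  ultimately show ?case using finite_subset by blast
qed

end


definition Nset where
  "Nset V r p rk \<omega> s = {v \<in> V. v \<noteq> r \<and> origin V r p rk \<omega> s v = None \<and> origin V r p rk \<omega> s (p v) \<noteq> None \<and> fst (\<omega> (s, v))}"

abbreviation cnt where "cnt V r p rk \<omega> s \<equiv> snd (dproc V r p rk \<omega> s)"

lemma orig_0: "origin V r p rk \<omega> 0 v = (if v = r then Some 0 else None)"
  by (simp add: origin_def)

lemma orig_Suc: "origin V r p rk \<omega> (Suc s) v =
  (if v \<notin> V then None else if v = r then Some 0
   else if origin V r p rk \<omega> s v = None then
     (if origin V r p rk \<omega> s (p v) = None then None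
      else if fst (\<omega> (s, v)) then Some (cnt V r p rk \<omega> s + card {w \<in> Nset V r p rk \<omega> s. rk w < rk v})
      else origin V r p rk \<omega> s (p v))
   else (if snd (\<omega> (s, v)) then origin V r p rk \<omega> s (p v) else origin V r p rk \<omega> s v))"
  by (simp add: origin_def dstep_def Let_def Nset_def)

lemma cnt_Suc: "cnt V r p rk \<omega> (Suc s) = cnt V r p rk \<omega> s + card (Nset V r p rk \<omega> s)"
  by (simp add: origin_def dstep_def Let_def Nset_def)

lemma cnt_0: "cnt V r p rk \<omega> 0 = 1" by simp

lemma cnt_mono: "s \<le> s' \<Longrightarrow> cnt V r p rk \<omega> s \<le> cnt V r p rk \<omega> s'"
proof (induction s' rule: dec_induct)
  case (step n) thus ?case using cnt_Suc[of V r p rk \<omega> n] by linarith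
qed simp

lemma cnt_pos: "cnt V r p rk \<omega> s \<ge> 1"
  using cnt_mono[of 0 s V r p rk \<omega>] by simp

context
  fixes V :: "nat set" and E r p and rk :: "nat \<Rightarrow> nat" and \<omega> :: "nat \<times> nat \<Rightarrow> bool \<times> bool"
  assumes bfs: "bfs_tree V E r p"
begin

lemma active: "origin V r p rk \<omega> s y \<noteq> None \<longleftrightarrow> y \<in> V \<and> tdepth p r y \<le> s"
proof (induction s arbitrary: y)
  case 0
  show ?case using depth0[OF bfs] depth_r r_in[OF bfs] by (auto simp: orig_0)
next
  case (Suc s)
  show ?case
  proof (cases "y \<in> V \<and> y \<noteq> r")
    case False thus ?thesis using depth_r r_in[OF bfs] by (auto simp: orig_Suc)
  next
    case True
    hence py: "p y \<in> V" "tdepth p r (p y) = tdepth p r y - 1" "tdepth p r y \<ge> 1"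
      using par_in[OF bfs] depth_par[OF bfs] by auto
    show ?thesis using True py Suc[of y] Suc[of "p y"]
      by (auto simp: orig_Suc[of V r p rk \<omega> s y])
  qed
qed

lemma Nset_sub: "Nset V r p rk \<omega> s \<subseteq> {y \<in> V. tdepth p r y = Suc s}"
proof
  fix y assume y: "y \<in> Nset V r p rk \<omega> s"
  hence yV: "y \<in> V" "y \<noteq> r" by (auto simp: Nset_def)
  from y have "origin V r p rk \<omega> s y = None" "origin V r p rk \<omega> s (p y) \<noteq> None" by (auto simp: Nset_def)
  hence "\<not> tdepth p r y \<le> s" "tdepth p r (p y) \<le> s" using active[of s y] active[of s "p y"] yV by auto
  thus "y \<in> {y \<in> V. tdepth p r y = Suc s}" using yV depth_par[OF bfs yV] by auto
qed

lemma Nset_finite: "locally_finite V E \<Longrightarrow> finite (Nset V r p rk \<omega> s)"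
  using Nset_sub level_finite[OF bfs] finite_subset by blast

lemma labels_lt:
  assumes lf: "locally_finite V E"
  shows "origin V r p rk \<omega> s y = Some k \<Longrightarrow> k < cnt V r p rk \<omega> s"
proof (induction s arbitrary: y k)
  case 0 thus ?case by (simp add: orig_0 split: if_splits)
next
  case (Suc s)
  have fin: "finite (Nset V r p rk \<omega> s)" using Nset_finite[OF lf] .
  have c1: "cnt V r p rk \<omega> s \<le> cnt V r p rk \<omega> (Suc s)" by (rule cnt_mono) simp
  show ?case
  proof (cases "y \<notin> V \<or> y = r")
    case True
    hence "k = 0" using Suc.prems r_in[OF bfs] by (auto simp: orig_Suc split: if_splits)
    thus ?thesis using cnt_pos[of V r p rk \<omega> "Suc s"] by simp
  next
    case False
    show ?thesis
    proof (cases "origin V r p rk \<omega> s y = None")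
      case True
      show ?thesis
      proof (cases "fst (\<omega> (s, y))")
        case f: True
        hence "origin V r p rk \<omega> s (p y) \<noteq> None" using Suc.prems True False by (auto simp: orig_Suc split: if_splits)
        hence yN: "y \<in> Nset V r p rk \<omega> s" using True False f by (auto simp: Nset_def)
        have k: "k = cnt V r p rk \<omega> s + card {w \<in> Nset V r p rk \<omega> s. rk w < rk y}"
          using Suc.prems True False f by (auto simp: orig_Suc split: if_splits)
        have "{w \<in> Nset V r p rk \<omega> s. rk w < rk y} \<subset> Nset V r p rk \<omega> s" using yN by auto
        hence "card {w \<in> Nset V r p rk \<omega> s. rk w < rk y} < card (Nset V r p rk \<omega> s)"
          using fin by (simp add: psubset_card_mono)
        thus ?thesis using k cnt_Suc[of V r p rk \<omega> s] by simp
      next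
        case f: False
        hence "origin V r p rk \<omega> s (p y) = Some k" using Suc.prems True False by (auto simp: orig_Suc split: if_splits)
        thus ?thesis using Suc.IH c1 by fastforce
      qed
    next
      case nN: False
      hence "origin V r p rk \<omega> s (p y) = Some k \<or> origin V r p rk \<omega> s y = Some k"
        using Suc.prems False by (auto simp: orig_Suc split: if_splits)
      thus ?thesis using Suc.IH c1 by fastforce
    qed
  qed
qed

end


fun good :: "(nat \<Rightarrow> nat) \<Rightarrow> nat \<Rightarrow> nat \<Rightarrow> (nat \<times> nat \<Rightarrow> bool \<times> bool) \<Rightarrow> nat \<Rightarrow> nat \<Rightarrow> bool" where
  "good p r D \<omega> 0 x = True"
| "good p r D \<omega> (Suc s) x = (tdepth p r x \<le> D \<or>
     (if tdepth p r x = Suc s then \<not> fst (\<omega> (s, x)) \<and> good p r D \<omega> s (p x)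
      else if snd (\<omega> (s, x)) then good p r D \<omega> s (p x) else good p r D \<omega> s x))"

context
  fixes V :: "nat set" and E r p and rk :: "nat \<Rightarrow> nat" and \<omega> :: "nat \<times> nat \<Rightarrow> bool \<times> bool"
  assumes bfs: "bfs_tree V E r p" and lf: "locally_finite V E" and inj: "inj_on rk V"
begin

lemma fresh_unique:
  assumes a: "a \<in> V" "a \<noteq> r" "tdepth p r a = Suc s0" "fst (\<omega> (s0, a))"
    and L: "origin V r p rk \<omega> (Suc s0) a = Some L"
  shows "Suc s0 \<le> s \<Longrightarrow> origin V r p rk \<omega> s y = Some L \<Longrightarrow> y \<in> V \<and> tanc p r a y"
proof (induction s arbitrary: y rule: dec_induct)
  let ?o = "origin V r p rk \<omega>"
  have aN: "a \<in> Nset V r p rk \<omega> s0"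
    using a active[OF bfs, of rk \<omega> s0 a] active[OF bfs, of rk \<omega> s0 "p a"] par_in[OF bfs a(1,2)]
      depth_par[OF bfs a(1,2)] by (auto simp: Nset_def)
  have Ldef: "L = cnt V r p rk \<omega> s0 + card {w \<in> Nset V r p rk \<omega> s0. rk w < rk a}"
    using L aN a by (auto simp: orig_Suc Nset_def split: if_splits)
  hence Lge: "cnt V r p rk \<omega> s0 \<le> L" by simp
  hence L0: "L \<noteq> 0" using cnt_pos[of V r p rk \<omega> s0] by linarith
  have fin: "finite (Nset V r p rk \<omega> s0)" using Nset_finite[OF bfs lf] .
  {
    case base
    have yV: "y \<in> V" "y \<noteq> r" using base L0 by (auto simp: orig_Suc split: if_splits)
    show ?case
    proof (cases "?o s0 y = None")
      case True
      hence pn: "?o s0 (p y) \<noteq> None" using base yV by (auto simp: orig_Suc split: if_splits)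
      show ?thesis
      proof (cases "fst (\<omega> (s0, y))")
        case f: True
        hence yN: "y \<in> Nset V r p rk \<omega> s0" using True pn yV by (auto simp: Nset_def)
        have cy: "L = cnt V r p rk \<omega> s0 + card {w \<in> Nset V r p rk \<omega> s0. rk w < rk y}"
          using base yV True pn f by (auto simp: orig_Suc)
        have "y = a"
        proof (rule ccontr)
          assume "y \<noteq> a"
          hence "rk y \<noteq> rk a" using inj yV a(1) by (auto dest: inj_onD)
          hence "rk y < rk a \<or> rk a < rk y" by linarith
          moreover {
            fix b c assume bc: "b \<in> Nset V r p rk \<omega> s0" "c \<in> Nset V r p rk \<omega> s0" "rk b < rk c"
            have "{w \<in> Nset V r p rk \<omega> s0. rk w < rk b} \<subset> {w \<in> Nset V r p rk \<omega> s0. rk w < rk c}"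
              using bc by auto
            hence "card {w \<in> Nset V r p rk \<omega> s0. rk w < rk b} < card {w \<in> Nset V r p rk \<omega> s0. rk w < rk c}"
              using fin by (simp add: psubset_card_mono)
          }
          ultimately show False using cy Ldef yN aN by fastforce
        qed
        thus ?thesis using yV tanc_refl[OF bfs] by simp
      next
        case f: False
        hence "?o s0 (p y) = Some L" using base yV True pn by (auto simp: orig_Suc)
        thus ?thesis using labels_lt[OF bfs lf] Lge by fastforce
      qed
    next
      case False
      hence "?o s0 (p y) = Some L \<or> ?o s0 y = Some L" using base yV by (auto simp: orig_Suc split: if_splits)
      thus ?thesis using labels_lt[OF bfs lf] Lge by fastforce
    qed
  next
    case (step s)
    have Llt: "L < cnt V r p rk \<omega> s"
      using labels_lt[OF bfs lf L] cnt_mono[OF step.hyps(1), of V r p rk \<omega>] by linarith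
    have yV: "y \<in> V" "y \<noteq> r" using step.prems L0 by (auto simp: orig_Suc split: if_splits)
    have pV: "p y \<in> V" using par_in[OF bfs yV] by simp
    show ?case
    proof (cases "?o s y = None")
      case True
      hence pn: "?o s (p y) \<noteq> None" using step.prems yV by (auto simp: orig_Suc split: if_splits)
      show ?thesis
      proof (cases "fst (\<omega> (s, y))")
        case True
        hence "L \<ge> cnt V r p rk \<omega> s" using step.prems yV \<open>?o s y = None\<close> pn by (auto simp: orig_Suc)
        thus ?thesis using Llt by linarith
      next
        case False
        hence "?o s (p y) = Some L" using step.prems yV \<open>?o s y = None\<close> pn by (auto simp: orig_Suc)
        thus ?thesis using step.IH tanc_par[OF bfs yV] yV by blast
      qed
    next
      case False
      hence "?o s (p y) = Some L \<or> ?o s y = Some L" using step.prems yV by (auto simp: orig_Suc split: if_splits)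
      thus ?thesis using step.IH tanc_par[OF bfs yV] yV by blast
    qed
  }
qed

end


context
  fixes V :: "nat set" and E r p and rk :: "nat \<Rightarrow> nat" and \<omega> :: "nat \<times> nat \<Rightarrow> bool \<times> bool" and D :: nat
  assumes bfs: "bfs_tree V E r p"
begin

lemma lineage:
  "x \<in> V \<Longrightarrow> tdepth p r x \<le> s \<Longrightarrow> \<not> good p r D \<omega> s x \<Longrightarrow>
   \<exists>a s0. a \<in> V \<and> a \<noteq> r \<and> D < tdepth p r a \<and> tdepth p r a = Suc s0 \<and> Suc s0 \<le> s \<and> fst (\<omega> (s0, a))
     \<and> tanc p r a x \<and> origin V r p rk \<omega> s x = origin V r p rk \<omega> (Suc s0) a"
proof (induction s arbitrary: x)
  case 0 thus ?case by simp
next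
  case (Suc s)
  let ?o = "origin V r p rk \<omega>"
  have dx: "D < tdepth p r x" using Suc.prems by auto
  hence xr: "x \<noteq> r" using depth_r by auto
  note pV = par_in[OF bfs Suc.prems(1) xr] and dp = depth_par[OF bfs Suc.prems(1) xr]
  show ?case
  proof (cases "tdepth p r x = Suc s")
    case True
    show ?thesis
    proof (cases "fst (\<omega> (s, x))")
      case True
      thus ?thesis using Suc.prems \<open>tdepth p r x = Suc s\<close> dx xr tanc_refl[OF bfs] by blast
    next
      case False
      hence ng: "\<not> good p r D \<omega> s (p x)" using Suc.prems True by auto
      obtain a s0 where A: "a \<in> V \<and> a \<noteq> r \<and> D < tdepth p r a \<and> tdepth p r a = Suc s0 \<and> Suc s0 \<le> s \<and> fst (\<omega> (s0, a))
        \<and> tanc p r a (p x) \<and> ?o s (p x) = ?o (Suc s0) a"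
        using Suc.IH[OF _ _ ng] pV dp True by fastforce
      have "?o s x = None" using active[OF bfs, of rk \<omega> s x] True by simp
      moreover have "?o s (p x) \<noteq> None" using active[OF bfs, of rk \<omega> s "p x"] pV dp True by simp
      ultimately have "?o (Suc s) x = ?o s (p x)" using False Suc.prems(1) xr by (simp add: orig_Suc)
      thus ?thesis using A tanc_par[OF bfs Suc.prems(1) xr] by (metis le_SucI)
    qed
  next
    case False
    hence le: "tdepth p r x \<le> s" using Suc.prems by simp
    have on: "?o s x \<noteq> None" using active[OF bfs, of rk \<omega> s x] le Suc.prems(1) by simp
    show ?thesis
    proof (cases "snd (\<omega> (s, x))")
      case True
      hence ng: "\<not> good p r D \<omega> s (p x)" using Suc.prems False by auto
      obtain a s0 where A: "a \<in> V \<and> a \<noteq> r \<and> D < tdepth p r a \<and> tdepth p r a = Suc s0 \<and> Suc s0 \<le> s \<and> fst (\<omega> (s0, a))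
        \<and> tanc p r a (p x) \<and> ?o s (p x) = ?o (Suc s0) a"
        using Suc.IH[OF _ _ ng] pV dp le by fastforce
      have "?o (Suc s) x = ?o s (p x)" using True on Suc.prems(1) xr by (auto simp: orig_Suc)
      thus ?thesis using A tanc_par[OF bfs Suc.prems(1) xr] by (metis le_SucI)
    next
      case snd: False
      hence ng: "\<not> good p r D \<omega> s x" using Suc.prems False by auto
      obtain a s0 where A: "a \<in> V \<and> a \<noteq> r \<and> D < tdepth p r a \<and> tdepth p r a = Suc s0 \<and> Suc s0 \<le> s \<and> fst (\<omega> (s0, a))
        \<and> tanc p r a x \<and> ?o s x = ?o (Suc s0) a"
        using Suc.IH[OF Suc.prems(1) le ng] by blast
      have "?o (Suc s) x = ?o s x" using snd on Suc.prems(1) xr by (auto simp: orig_Suc)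
      thus ?thesis using A by (metis le_SucI)
    qed
  qed
qed

end

lemma same_imp_good:
  assumes bfs: "bfs_tree V E r p" and lf: "locally_finite V E" and inj: "inj_on rk V"
    and uV: "u \<in> V" and vV: "v \<in> V" and du: "tdepth p r u \<le> t"
    and wu: "tanc p r w u" and wv: "tanc p r w v"
    and mx: "\<forall>w'\<in>V. tanc p r w' u \<and> tanc p r w' v \<longrightarrow> tdepth p r w' \<le> tdepth p r w"
    and eq: "origin V r p rk \<omega> t u = origin V r p rk \<omega> t v"
  shows "good p r (tdepth p r w) \<omega> t u"
proof (rule ccontr)
  assume "\<not> good p r (tdepth p r w) \<omega> t u"
  then obtain a s0 where A: "a \<in> V" "a \<noteq> r" "tdepth p r w < tdepth p r a" "tdepth p r a = Suc s0" "Suc s0 \<le> t"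
    "fst (\<omega> (s0, a))" "tanc p r a u" "origin V r p rk \<omega> t u = origin V r p rk \<omega> (Suc s0) a"
    using lineage[OF bfs uV du] by blast
  obtain L where L: "origin V r p rk \<omega> (Suc s0) a = Some L"
    using active[OF bfs, of rk \<omega> "Suc s0" a] A by auto
  have "origin V r p rk \<omega> t v = Some L" using eq A L by simp
  hence "tanc p r a v" using fresh_unique[OF bfs lf inj A(1,2,4,6) L A(5)] by blast
  thus False using mx A by fastforce
qed



abbreviation Mc :: "real \<Rightarrow> real \<Rightarrow> (bool \<times> bool) measure" where
  "Mc \<alpha> \<beta> \<equiv> measure_pmf (pair_pmf (bernoulli_pmf \<alpha>) (bernoulli_pmf \<beta>))"

lemma coin_fst: "0 \<le> \<alpha> \<Longrightarrow> \<alpha> \<le> 1 \<Longrightarrow> measure (Mc \<alpha> \<beta>) {c. \<not> fst c} = 1 - \<alpha>"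
proof -
  assume a: "0 \<le> \<alpha>" "\<alpha> \<le> 1"
  have "measure (Mc \<alpha> \<beta>) {c. \<not> fst c} = measure (map_pmf fst (pair_pmf (bernoulli_pmf \<alpha>) (bernoulli_pmf \<beta>))) {False}"
    by (simp add: measure_map_pmf vimage_def)
  also have "\<dots> = pmf (bernoulli_pmf \<alpha>) False" by (simp add: map_fst_pair_pmf measure_pmf_single)
  finally show ?thesis using a by simp
qed

lemma coin_snd: "0 \<le> \<beta> \<Longrightarrow> \<beta> \<le> 1 \<Longrightarrow> measure (Mc \<alpha> \<beta>) {c. snd c} = \<beta> \<and> measure (Mc \<alpha> \<beta>) {c. \<not> snd c} = 1 - \<beta>"
proof -
  assume a: "0 \<le> \<beta>" "\<beta> \<le> 1"
  have "measure (Mc \<alpha> \<beta>) {c. snd c} = measure (map_pmf snd (pair_pmf (bernoulli_pmf \<alpha>) (bernoulli_pmf \<beta>))) {True}"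
    by (simp add: measure_map_pmf vimage_def)
  also have "\<dots> = pmf (bernoulli_pmf \<beta>) True" by (simp add: map_snd_pair_pmf measure_pmf_single)
  finally have 1: "measure (Mc \<alpha> \<beta>) {c. snd c} = \<beta>" using a by simp
  have "measure (Mc \<alpha> \<beta>) {c. \<not> snd c} = measure (map_pmf snd (pair_pmf (bernoulli_pmf \<alpha>) (bernoulli_pmf \<beta>))) {False}"
    by (simp add: measure_map_pmf vimage_def)
  also have "\<dots> = pmf (bernoulli_pmf \<beta>) False" by (simp add: map_snd_pair_pmf measure_pmf_single)
  finally show ?thesis using a 1 by simp
qed

lemma indep_coord:
  fixes i :: "nat \<times> nat" and Q :: "bool \<times> bool \<Rightarrow> bool"
  assumes iJ: "i \<notin> J" and G: "G \<in> measurable (PiM J (\<lambda>_. Mc \<alpha> \<beta>)) (count_space UNIV)"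
  shows "measure (coin_space \<alpha> \<beta>) {\<omega> \<in> space (coin_space \<alpha> \<beta>). Q (\<omega> i) \<and> G (restrict \<omega> J)}
     = measure (Mc \<alpha> \<beta>) {c. Q c} * measure (coin_space \<alpha> \<beta>) {\<omega> \<in> space (coin_space \<alpha> \<beta>). G (restrict \<omega> J)}"
proof -
  let ?M = "Mc \<alpha> \<beta>"
  let ?P = "coin_space \<alpha> \<beta>"
  interpret product_prob_space "\<lambda>_. ?M" UNIV
    by (simp add: product_prob_space_def product_sigma_finite_def product_prob_space_axioms_def
        measure_pmf.prob_space_axioms prob_space_imp_sigma_finite)
  have P: "?P = PiM UNIV (\<lambda>_. ?M)" by (simp add: coin_space_def)
  have ind: "indep_vars (\<lambda>_. ?M) (\<lambda>i \<omega>. \<omega> i) UNIV"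
  proof (subst indep_vars_iff_distr_eq_PiM)
    show "distr (PiM UNIV (\<lambda>_. ?M)) (PiM UNIV (\<lambda>_. ?M)) (\<lambda>x. \<lambda>i\<in>UNIV. x i) = PiM UNIV (\<lambda>i. distr (PiM UNIV (\<lambda>_. ?M)) ?M (\<lambda>\<omega>. \<omega> i))"
      by (simp add: PiM_component distr_id2 restrict_UNIV)
  qed auto
  have iv: "indep_var (PiM {i} (\<lambda>_. ?M)) (\<lambda>\<omega>. restrict (\<lambda>i. \<omega> i) {i}) (PiM J (\<lambda>_. ?M)) (\<lambda>\<omega>. restrict (\<lambda>i. \<omega> i) J)"
    using iJ by (intro indep_var_restrict[OF ind]) auto
  have sa: "{f \<in> space (PiM {i} (\<lambda>_. ?M)). Q (f i)} \<in> sets (PiM {i} (\<lambda>_. ?M))"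
    by measurable
  have sb: "{f \<in> space (PiM J (\<lambda>_. ?M)). G f} \<in> sets (PiM J (\<lambda>_. ?M))"
    using G by measurable
  have "prob ((\<lambda>x. (restrict (\<lambda>i. x i) {i}, restrict (\<lambda>i. x i) J)) -` ({f \<in> space (PiM {i} (\<lambda>_. ?M)). Q (f i)} \<times> {f \<in> space (PiM J (\<lambda>_. ?M)). G f}) \<inter> space (PiM UNIV (\<lambda>_. ?M)))
     = prob ((\<lambda>x. restrict (\<lambda>i. x i) {i}) -` {f \<in> space (PiM {i} (\<lambda>_. ?M)). Q (f i)} \<inter> space (PiM UNIV (\<lambda>_. ?M))) *
       prob ((\<lambda>x. restrict (\<lambda>i. x i) J) -` {f \<in> space (PiM J (\<lambda>_. ?M)). G f} \<inter> space (PiM UNIV (\<lambda>_. ?M)))"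
    by (rule indep_varD[OF iv sa sb])
  moreover have "(\<lambda>x. (restrict (\<lambda>i. x i) {i}, restrict (\<lambda>i. x i) J)) -` ({f \<in> space (PiM {i} (\<lambda>_. ?M)). Q (f i)} \<times> {f \<in> space (PiM J (\<lambda>_. ?M)). G f}) \<inter> space (PiM UNIV (\<lambda>_. ?M))
     = {\<omega> \<in> space ?P. Q (\<omega> i) \<and> G (restrict \<omega> J)}"
    by (auto simp: P space_PiM)
  moreover have "(\<lambda>x. restrict (\<lambda>i. x i) J) -` {f \<in> space (PiM J (\<lambda>_. ?M)). G f} \<inter> space (PiM UNIV (\<lambda>_. ?M))
     = {\<omega> \<in> space ?P. G (restrict \<omega> J)}"
    by (auto simp: P space_PiM)
  moreover have "(\<lambda>x. restrict (\<lambda>i. x i) {i}) -` {f \<in> space (PiM {i} (\<lambda>_. ?M)). Q (f i)} \<inter> space (PiM UNIV (\<lambda>_. ?M))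
     = {\<omega> \<in> space (PiM UNIV (\<lambda>_. ?M)). \<omega> i \<in> {c. Q c}}"
    by (auto simp: space_PiM)
  moreover have "prob {\<omega> \<in> space (PiM UNIV (\<lambda>_. ?M)). \<omega> i \<in> {c. Q c}} = measure ?M {c. Q c}"
    using emeasure_PiM_Collect_single[of i "{c. Q c}"]
    by (simp add: emeasure_eq_measure measure_pmf.emeasure_eq_measure)
  ultimately show ?thesis by (simp add: P)
qed



lemma good_local: "(\<And>i y. i < s \<Longrightarrow> \<omega> (i, y) = \<omega>' (i, y)) \<Longrightarrow> good p r D \<omega> s x = good p r D \<omega>' s x"
proof (induction s arbitrary: x)
  case (Suc s)
  have "\<omega> (s, x) = \<omega>' (s, x)" using Suc.prems by simp
  moreover have "\<And>y. good p r D \<omega> s y = good p r D \<omega>' s y" using Suc by simp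
  ultimately show ?case by (simp only: good.simps)
qed simp

lemma good_meas:
  "{(i, y). i < s} \<subseteq> J \<Longrightarrow> (\<lambda>\<omega>. good p r D \<omega> s x) \<in> measurable (PiM J (\<lambda>_. Mc \<alpha> \<beta>)) (count_space UNIV)"
proof (induction s arbitrary: x)
  case 0 thus ?case by simp
next
  case (Suc s)
  have J: "{(i, y). i < s} \<subseteq> J" "(s, x) \<in> J" using Suc.prems by auto
  have c: "(\<lambda>\<omega>. \<omega> (s, x)) \<in> measurable (PiM J (\<lambda>_. Mc \<alpha> \<beta>)) (Mc \<alpha> \<beta>)"
    using J(2) by (rule measurable_component_singleton)
  have f: "Measurable.pred (PiM J (\<lambda>_. Mc \<alpha> \<beta>)) (\<lambda>\<omega>. fst (\<omega> (s, x)))"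
    by (rule measurable_compose[OF c]) simp
  have sn: "Measurable.pred (PiM J (\<lambda>_. Mc \<alpha> \<beta>)) (\<lambda>\<omega>. snd (\<omega> (s, x)))"
    by (rule measurable_compose[OF c]) simp
  note IH1 = Suc.IH[OF J(1), of x] and IH2 = Suc.IH[OF J(1), of "p x"]
  show ?case
  proof (cases "tdepth p r x \<le> D")
    case True thus ?thesis by simp
  next
    case False
    show ?thesis
    proof (cases "tdepth p r x = Suc s")
      case True
      have "(\<lambda>\<omega>. good p r D \<omega> (Suc s) x) = (\<lambda>\<omega>. \<not> fst (\<omega> (s, x)) \<and> good p r D \<omega> s (p x))"
        using True False by simp
      thus ?thesis using f IH2 by (simp add: pred_intros_logic)
    next
      case nT: False
      have "(\<lambda>\<omega>. good p r D \<omega> (Suc s) x) = (\<lambda>\<omega>. if snd (\<omega> (s, x)) then good p r D \<omega> s (p x) else good p r D \<omega> s x)"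
        using nT False by simp
      thus ?thesis using sn IH1 IH2 by (simp add: measurable_If)
    qed
  qed
qed

lemma good_restrict: "{(i, y). i < s} \<subseteq> J \<Longrightarrow> good p r D (restrict \<omega> J) s x = good p r D \<omega> s x"
  by (rule good_local) auto



context
  fixes V :: "nat set" and E r p and D :: nat and \<alpha> \<beta> q M :: real
  assumes bfs: "bfs_tree V E r p"
    and ab: "0 \<le> \<alpha>" "\<alpha> \<le> 1" "0 \<le> \<beta>" "\<beta> \<le> 1"
    and q: "0 < q" "1 - \<alpha> \<le> q" and M: "1 \<le> M" "\<beta> * M + (1 - \<beta>) * q \<le> q * M"
begin

lemma good_bound:
  "x \<in> V \<Longrightarrow> tdepth p r x \<le> s \<Longrightarrow>
   measure (coin_space \<alpha> \<beta>) {\<omega> \<in> space (coin_space \<alpha> \<beta>). good p r D \<omega> s x}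
     \<le> q ^ (tdepth p r x - D) * M ^ (s - tdepth p r x)"
proof (induction s arbitrary: x)
  let ?P = "coin_space \<alpha> \<beta>"
  interpret PS: prob_space ?P unfolding coin_space_def
    by (intro prob_space_PiM measure_pmf.prob_space_axioms)
  {
    case 0
    hence "tdepth p r x - D = 0" by simp
    thus ?case using PS.prob_le_1 by simp
  next
    case (Suc s)
    let ?J = "{(i, y). i < s}"
    have Jm: "\<And>y. (\<lambda>\<omega>. good p r D \<omega> s y) \<in> measurable (PiM ?J (\<lambda>_. Mc \<alpha> \<beta>)) (count_space UNIV)"
      by (rule good_meas) simp
    have gr: "\<And>\<omega> y. good p r D (restrict \<omega> ?J) s y = good p r D \<omega> s y"
      by (rule good_restrict) simp
    have sJ: "(s, x) \<notin> ?J" by simp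
    note ic = indep_coord[OF sJ Jm, unfolded gr]
    show ?case
    proof (cases "tdepth p r x \<le> D")
      case True
      hence "tdepth p r x - D = 0" by simp
      moreover have "1 \<le> M ^ (Suc s - tdepth p r x)" using M by simp
      ultimately show ?thesis using PS.prob_space by simp
    next
      case False
      hence xr: "x \<noteq> r" using depth_r by auto
      note pV = par_in[OF bfs Suc.prems(1) xr] and dp = depth_par[OF bfs Suc.prems(1) xr]
      define k where "k = tdepth p r x - D - 1"
      have kk: "tdepth p r x - D = Suc k" "tdepth p r (p x) - D = k" using False dp unfolding k_def by auto
      show ?thesis
      proof (cases "tdepth p r x = Suc s")
        case True
        have "{\<omega> \<in> space ?P. good p r D \<omega> (Suc s) x} = {\<omega> \<in> space ?P. \<not> fst (\<omega> (s, x)) \<and> good p r D \<omega> s (p x)}"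
          using True False by auto
        hence "measure ?P {\<omega> \<in> space ?P. good p r D \<omega> (Suc s) x}
            = (1 - \<alpha>) * measure ?P {\<omega> \<in> space ?P. good p r D \<omega> s (p x)}"
          using ic[of "\<lambda>c. \<not> fst c" "p x"] coin_fst[OF ab(1,2)] by simp
        also have "\<dots> \<le> (1 - \<alpha>) * (q ^ k * M ^ 0)"
          using Suc.IH[OF pV[THEN conjunct1]] dp True kk ab by (intro mult_left_mono) auto
        also have "\<dots> \<le> q ^ Suc k" using q by (simp add: mult_right_mono)
        finally show ?thesis using kk True by simp
      next
        case nT: False
        hence le: "tdepth p r x \<le> s" using Suc.prems by simp
        define g where "g = s - tdepth p r x"
        have gg: "Suc s - tdepth p r x = Suc g" "s - tdepth p r (p x) = Suc g" using le dp unfolding g_def by auto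
        have "{\<omega> \<in> space ?P. good p r D \<omega> (Suc s) x} =
              {\<omega> \<in> space ?P. snd (\<omega> (s, x)) \<and> good p r D \<omega> s (p x)} \<union> {\<omega> \<in> space ?P. \<not> snd (\<omega> (s, x)) \<and> good p r D \<omega> s x}"
          using nT False by auto
        moreover have gm: "\<And>y. Measurable.pred ?P (\<lambda>\<omega>. good p r D \<omega> s y)"
          unfolding coin_space_def by (rule good_meas) simp
        have cm: "(\<lambda>\<omega>. \<omega> (s, x)) \<in> measurable ?P (Mc \<alpha> \<beta>)"
          unfolding coin_space_def by (rule measurable_component_singleton) simp
        have sn: "Measurable.pred ?P (\<lambda>\<omega>. snd (\<omega> (s, x)))"
          by (rule measurable_compose[OF cm]) simp
        have e1: "{\<omega> \<in> space ?P. snd (\<omega> (s, x)) \<and> good p r D \<omega> s (p x)} \<in> PS.events"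
          using gm[of "p x"] sn unfolding pred_def[symmetric] by (intro pred_intros_logic)
        have e2: "{\<omega> \<in> space ?P. \<not> snd (\<omega> (s, x)) \<and> good p r D \<omega> s x} \<in> PS.events"
          using gm[of x] sn unfolding pred_def[symmetric] by (intro pred_intros_logic)
        ultimately have "measure ?P {\<omega> \<in> space ?P. good p r D \<omega> (Suc s) x} =
             measure ?P {\<omega> \<in> space ?P. snd (\<omega> (s, x)) \<and> good p r D \<omega> s (p x)} + measure ?P {\<omega> \<in> space ?P. \<not> snd (\<omega> (s, x)) \<and> good p r D \<omega> s x}"
          by (simp add: PS.finite_measure_Union[OF e1 e2] disjoint_iff)
        also have "\<dots> = \<beta> * measure ?P {\<omega> \<in> space ?P. good p r D \<omega> s (p x)} + (1 - \<beta>) * measure ?P {\<omega> \<in> space ?P. good p r D \<omega> s x}"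
          using ic[of "\<lambda>c. snd c" "p x"] ic[of "\<lambda>c. \<not> snd c" x] coin_snd[OF ab(3,4)] by simp
        also have "\<dots> \<le> \<beta> * (q ^ k * M ^ Suc g) + (1 - \<beta>) * (q ^ Suc k * M ^ g)"
          using Suc.IH[OF pV[THEN conjunct1]] Suc.IH[OF Suc.prems(1) le] dp le kk gg g_def ab
          by (intro add_mono mult_left_mono) auto
        also have "\<dots> = (q ^ k * M ^ g) * (\<beta> * M + (1 - \<beta>) * q)" by (simp add: algebra_simps)
        also have "\<dots> \<le> (q ^ k * M ^ g) * (q * M)" using M q by (intro mult_left_mono) auto
        also have "\<dots> = q ^ Suc k * M ^ Suc g" by (simp add: algebra_simps)
        finally show ?thesis using kk gg by simp
      qed
    qed
  }
qed

end


lemma analytic: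
  fixes \<alpha> \<beta> c \<eta> K0 s :: real and g r0 :: nat
  assumes a: "0 < \<alpha>" "\<alpha> < 1" and b: "0 < \<beta>" "\<beta> < 1" and c: "0 < c" "c \<le> 1/4"
    and eta: "\<eta> = min \<alpha> ((1 - \<beta>) / 2)"
    and K0: "K0 = 1 + \<eta> * (1 + 2 * (\<beta> / (1 - \<beta>))\<^sup>2)"
    and s: "s = real g + real r0" "1 \<le> s"
    and cond: "real r0 > \<beta> * s + K0 * s powr (1/2 + c)"
  shows "\<exists>q M. 0 < q \<and> 1 - \<alpha> \<le> q \<and> 1 \<le> M \<and> \<beta> * M + (1 - \<beta>) * q \<le> q * M \<and>
           q ^ r0 * M ^ g \<le> exp (- \<eta> * s powr (2 * c))"
proof -
  define A where "A = s powr (c - 1/2)"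
  define X where "X = s powr (1/2 + c)"
  define Y where "Y = s powr (2 * c)"
  have A0: "0 < A" using s unfolding A_def by simp
  have "s powr (c - 1/2) \<le> s powr 0" using s c by (intro powr_mono) auto
  hence A1: "A \<le> 1" using s unfolding A_def by simp
  have AX: "A * X = Y" unfolding A_def X_def Y_def by (simp add: powr_add[symmetric])
  have AAs: "A * A * s = Y"
  proof -
    have "A * A * s = s powr (c - 1/2) * s powr (c - 1/2) * s powr 1" using s unfolding A_def by simp
    also have "\<dots> = s powr ((c - 1/2) + (c - 1/2) + 1)" by (simp only: powr_add)
    also have "(c - 1/2) + (c - 1/2) + 1 = 2 * c" by simp
    finally show ?thesis unfolding Y_def .
  qed
  have X0: "0 \<le> X" unfolding X_def by simp
  have Y0: "0 \<le> Y" unfolding Y_def by simp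
  define bb where "bb = \<beta> / (1 - \<beta>)"
  have bb0: "0 < bb" using b unfolding bb_def by simp
  have bbb: "(1 - \<beta>) * bb = \<beta>" using b unfolding bb_def by simp
  define C where "C = 1 + 2 * bb\<^sup>2"
  have K0C: "K0 = 1 + \<eta> * C" using K0 unfolding C_def bb_def by simp
  have eta0: "0 < \<eta>" using eta a b by simp
  define e where "e = \<eta> * A"
  have e0: "0 < e" using eta0 A0 unfolding e_def by simp
  have ee: "e \<le> \<eta>" using eta0 A1 A0 unfolding e_def by (simp add: mult_left_le)
  have ea: "e \<le> \<alpha>" "e \<le> (1 - \<beta>) / 2" using ee eta by auto
  have e1: "e \<le> 1" using ea a by linarith
  have be: "bb * e \<le> 1/2"
  proof -
    have "bb * e \<le> bb * ((1 - \<beta>) / 2)" using ea bb0 by (simp add: mult_left_mono)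
    also have "\<dots> = \<beta> / 2" using bbb by (simp add: algebra_simps)
    finally show ?thesis using b by linarith
  qed
  have be0: "0 \<le> bb * e" using bb0 e0 by simp
  define q where "q = 1 / (1 + e)"
  define M where "M = 1 / (1 - bb * e)"
  have q0: "0 < q" using e0 unfolding q_def by simp
  have M1: "1 \<le> M" using be be0 unfolding M_def by simp
  have M0: "0 < M" using M1 by simp
  have qa: "1 - \<alpha> \<le> q"
  proof -
    have "(1 - \<alpha>) * (1 + e) \<le> (1 - \<alpha>) * (1 + \<alpha>)" using ea a by (intro mult_left_mono) auto
    also have "\<dots> \<le> 1" by (simp add: algebra_simps)
    finally show ?thesis using e0 unfolding q_def by (simp add: field_simps)
  qed
  have qM: "\<beta> * M + (1 - \<beta>) * q \<le> q * M"
  proof -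
    have num: "\<beta> * (1 + e) + (1 - \<beta>) * (1 - bb * e) = 1"
    proof -
      have "(1 - \<beta>) * (bb * e) = \<beta> * e" using bbb by (simp add: mult.assoc[symmetric])
      moreover have "\<beta> * (1 + e) + (1 - \<beta>) * (1 - bb * e) = 1 + \<beta> * e - (1 - \<beta>) * (bb * e)"
        by (simp add: algebra_simps)
      ultimately show ?thesis by linarith
    qed
    have d1: "1 + e \<noteq> 0" "1 - bb * e \<noteq> 0" using e0 be by auto
    have "\<beta> * M + (1 - \<beta>) * q = (\<beta> * (1 + e) + (1 - \<beta>) * (1 - bb * e)) / ((1 + e) * (1 - bb * e))"
      unfolding q_def M_def using d1 by (simp add: field_simps)
    also have "\<dots> = q * M" unfolding num q_def M_def by simp
    finally show ?thesis by simp
  qed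
  have lq: "ln q \<le> - (e - e\<^sup>2)"
    using ln_one_plus_pos_lower_bound[of e] e0 e1 unfolding q_def by (simp add: ln_div)
  have lM: "ln M \<le> bb * e + 2 * (bb * e)\<^sup>2"
    using ln_one_minus_pos_lower_bound[of "bb * e"] be be0 unfolding M_def by (simp add: ln_div)
  have "q ^ r0 * M ^ g = exp (real r0 * ln q + real g * ln M)"
    using q0 M0 by (simp add: exp_add exp_of_nat_mult)
  also have "real r0 * ln q + real g * ln M \<le> real r0 * (- (e - e\<^sup>2)) + real g * (bb * e + 2 * (bb * e)\<^sup>2)"
    using lq lM by (intro add_mono mult_left_mono) auto
  also have "\<dots> = - e * (real r0 - real g * bb) + e\<^sup>2 * (real r0 + 2 * bb\<^sup>2 * real g)"
    by (simp add: algebra_simps power2_eq_square)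
  also have "\<dots> \<le> - e * (K0 * X) + e\<^sup>2 * (C * s)"
  proof (rule add_mono)
    have "(1 - \<beta>) * real r0 - \<beta> * real g > K0 * X" using cond s unfolding X_def by (simp add: algebra_simps)
    moreover have "(1 - \<beta>) * (real r0 - real g * bb) = (1 - \<beta>) * real r0 - real g * ((1 - \<beta>) * bb)"
      by (simp add: algebra_simps)
    ultimately have "(1 - \<beta>) * (real r0 - real g * bb) > K0 * X" using bbb by (simp add: mult.commute)
    moreover have "0 \<le> K0 * X" using K0C eta0 X0 C_def by simp
    ultimately have Zp: "0 \<le> real r0 - real g * bb"
      using b by (metis less_le_not_le mult_less_0_iff nle_le order_less_le_trans diff_gt_0_iff_gt)
    have "(1 - \<beta>) * (real r0 - real g * bb) \<le> real r0 - real g * bb"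
      using b Zp by (simp add: mult_left_le_one_le)
    hence "K0 * X \<le> real r0 - real g * bb" using \<open>(1 - \<beta>) * (real r0 - real g * bb) > K0 * X\<close> by linarith
    thus "- e * (real r0 - real g * bb) \<le> - e * (K0 * X)" using e0 by simp
    have "real r0 + 2 * bb\<^sup>2 * real g \<le> C * s" unfolding C_def s
      by (simp add: algebra_simps)
    thus "e\<^sup>2 * (real r0 + 2 * bb\<^sup>2 * real g) \<le> e\<^sup>2 * (C * s)" by (simp add: mult_left_mono)
  qed
  also have "\<dots> = - \<eta> * K0 * Y + \<eta>\<^sup>2 * C * Y"
  proof -
    have 1: "e * (K0 * X) = \<eta> * K0 * (A * X)" unfolding e_def by (simp add: algebra_simps)
    have 2: "e\<^sup>2 * (C * s) = \<eta>\<^sup>2 * C * (A * A * s)" unfolding e_def by (simp add: algebra_simps power2_eq_square)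
    have 3: "- e * (K0 * X) = - (e * (K0 * X))" by simp
    show ?thesis unfolding 3 1 2 AX AAs by simp
  qed
  also have "\<dots> = - \<eta> * Y" unfolding K0C by (simp add: algebra_simps power2_eq_square)
  finally have "q ^ r0 * M ^ g \<le> exp (- \<eta> * Y)" by simp
  thus ?thesis using q0 qa M1 qM unfolding Y_def by blast
qed



lemma main_sym:
  fixes \<alpha> \<beta> c' K :: real
  assumes a: "0 < \<alpha>" "\<alpha> < 1" and b: "0 < \<beta>" "\<beta> < 1" and c: "0 < c'" "c' \<le> 1/4"
    and K: "K = 1 + min \<alpha> ((1 - \<beta>) / 2) * (1 + 2 * (\<beta> / (1 - \<beta>))\<^sup>2)"
    and bfs: "bfs_tree V E r p" and lf: "locally_finite V E" and inj: "inj_on rk V"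
    and uV: "u \<in> V" and vV: "v \<in> V" and du: "tdepth p r u \<le> t"
    and wu: "tanc p r w u" and wv: "tanc p r w v"
    and mx: "\<forall>w'\<in>V. tanc p r w' u \<and> tanc p r w' v \<longrightarrow> tdepth p r w' \<le> tdepth p r w"
    and s1: "1 \<le> real t - real (tdepth p r w)"
    and cond: "real (tdepth p r u - tdepth p r w) > \<beta> * (real t - real (tdepth p r w))
           + K * (real t - real (tdepth p r w)) powr (1/2 + c')"
  shows "measure (coin_space \<alpha> \<beta>)
           {\<omega> \<in> space (coin_space \<alpha> \<beta>). origin V r p rk \<omega> t u = origin V r p rk \<omega> t v}
         \<le> exp (- min \<alpha> ((1 - \<beta>) / 2) * (real t - real (tdepth p r w)) powr (2 * c'))"
proof -
  let ?P = "coin_space \<alpha> \<beta>"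
  let ?D = "tdepth p r w"
  interpret PS: prob_space ?P unfolding coin_space_def
    by (intro prob_space_PiM measure_pmf.prob_space_axioms)
  have Du: "?D \<le> tdepth p r u" using tanc_depth[OF bfs uV wu] .
  define g where "g = t - tdepth p r u"
  define r0 where "r0 = tdepth p r u - ?D"
  have sg: "real t - real ?D = real g + real r0" using Du du unfolding g_def r0_def by simp
  obtain q M where qM: "0 < q" "1 - \<alpha> \<le> q" "1 \<le> M" "\<beta> * M + (1 - \<beta>) * q \<le> q * M"
    "q ^ r0 * M ^ g \<le> exp (- min \<alpha> ((1 - \<beta>) / 2) * (real t - real ?D) powr (2 * c'))"
    using analytic[OF a b c refl K sg s1] cond unfolding r0_def by blast
  have sub: "{\<omega> \<in> space ?P. origin V r p rk \<omega> t u = origin V r p rk \<omega> t v} \<subseteq> {\<omega> \<in> space ?P. good p r ?D \<omega> t u}"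
    using same_imp_good[OF bfs lf inj uV vV du wu wv mx] by blast
  have gm: "Measurable.pred ?P (\<lambda>\<omega>. good p r ?D \<omega> t u)"
    unfolding coin_space_def by (rule good_meas) simp
  have "measure ?P {\<omega> \<in> space ?P. origin V r p rk \<omega> t u = origin V r p rk \<omega> t v} \<le> measure ?P {\<omega> \<in> space ?P. good p r ?D \<omega> t u}"
    using gm sub unfolding pred_def by (intro PS.finite_measure_mono) auto
  also have "\<dots> \<le> q ^ r0 * M ^ g"
    using good_bound[OF bfs _ _ _ _ qM(1,2,3,4) uV du, of ?D] a b unfolding r0_def g_def by auto
  finally show ?thesis using qM(5) by linarith
qed

theorem mainTheorem13:
  fixes \<alpha> \<beta> c :: real
  assumes "0 < \<alpha>" "\<alpha> < 1" "0 < \<beta>" "\<beta> < 1" "0 < c"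
  shows "\<exists>K c1 c2 :: real. K > 0 \<and> c1 > 0 \<and> c2 > 0 \<and>
    (\<forall>(V::nat set) E r p (rk::nat \<Rightarrow> nat) (t::nat) u v w.
       ugraph V E \<and> locally_finite V E \<and> gconnected V E \<and> bfs_tree V E r p \<and>
       inj_on rk V \<and> t > 0 \<and>
       u \<in> V \<and> v \<in> V \<and> gdist E r u \<le> t \<and> gdist E r v \<le> t \<and>
       w \<in> V \<and> tanc p r w u \<and> tanc p r w v \<and>
       (\<forall>w'\<in>V. tanc p r w' u \<and> tanc p r w' v \<longrightarrow> tdepth p r w' \<le> tdepth p r w) \<and>
       real (max (tdepth p r u - tdepth p r w) (tdepth p r v - tdepth p r w))
         > \<beta> * (real t - real (tdepth p r w))
           + K * (real t - real (tdepth p r w)) powr (1/2 + c)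
     \<longrightarrow> measure (coin_space \<alpha> \<beta>)
           {\<omega> \<in> space (coin_space \<alpha> \<beta>). origin V r p rk \<omega> t u = origin V r p rk \<omega> t v}
         \<le> exp (- c1 * (real t - real (tdepth p r w)) powr c2))"
proof -
  define c' where "c' = min c (1/4)"
  define \<eta> where "\<eta> = min \<alpha> ((1 - \<beta>) / 2)"
  define K where "K = 1 + \<eta> * (1 + 2 * (\<beta> / (1 - \<beta>))\<^sup>2)"
  have c': "0 < c'" "c' \<le> 1/4" "c' \<le> c" using assms unfolding c'_def by auto
  have eta: "0 < \<eta>" using assms unfolding \<eta>_def by auto
  have K0: "K > 0" using eta unfolding K_def by (simp add: add_pos_nonneg)
  have c2: "0 < 2 * c'" using c' by simp
  show ?thesis
  proof (rule exI[of _ K], rule exI[of _ \<eta>], rule exI[of _ "2 * c'"], intro conjI allI impI K0 eta c2)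
    fix V :: "nat set" and E r p and rk :: "nat \<Rightarrow> nat" and t :: nat and u v w
    assume H: "ugraph V E \<and> locally_finite V E \<and> gconnected V E \<and> bfs_tree V E r p \<and>
       inj_on rk V \<and> t > 0 \<and>
       u \<in> V \<and> v \<in> V \<and> gdist E r u \<le> t \<and> gdist E r v \<le> t \<and>
       w \<in> V \<and> tanc p r w u \<and> tanc p r w v \<and>
       (\<forall>w'\<in>V. tanc p r w' u \<and> tanc p r w' v \<longrightarrow> tdepth p r w' \<le> tdepth p r w) \<and>
       real (max (tdepth p r u - tdepth p r w) (tdepth p r v - tdepth p r w))
         > \<beta> * (real t - real (tdepth p r w))
           + K * (real t - real (tdepth p r w)) powr (1/2 + c)"
    let ?D = "tdepth p r w"
    let ?s = "real t - real ?D"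
    have bfs: "bfs_tree V E r p" and lf: "locally_finite V E" and inj: "inj_on rk V"
      and uV: "u \<in> V" and vV: "v \<in> V" and wu: "tanc p r w u" and wv: "tanc p r w v"
      and mx: "\<forall>w'\<in>V. tanc p r w' u \<and> tanc p r w' v \<longrightarrow> tdepth p r w' \<le> tdepth p r w"
      and cond: "real (max (tdepth p r u - ?D) (tdepth p r v - ?D)) > \<beta> * ?s + K * ?s powr (1/2 + c)"
      using H by auto
    have du: "tdepth p r u \<le> t" and dv: "tdepth p r v \<le> t"
      using H depth_gdist[OF bfs] by auto
    have Du: "?D \<le> tdepth p r u" and Dv: "?D \<le> tdepth p r v"
      using tanc_depth[OF bfs uV wu] tanc_depth[OF bfs vV wv] .
    have s1: "1 \<le> ?s"
    proof (rule ccontr)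
      assume "\<not> 1 \<le> ?s"
      hence "t = ?D" using Du du by linarith
      thus False using cond Du Dv du dv by simp
    qed
    have "?s powr (1/2 + c') \<le> ?s powr (1/2 + c)" using s1 c' by (intro powr_mono) auto
    hence "K * ?s powr (1/2 + c') \<le> K * ?s powr (1/2 + c)" using K0 by (simp add: mult_left_mono)
    hence cond': "real (max (tdepth p r u - ?D) (tdepth p r v - ?D)) > \<beta> * ?s + K * ?s powr (1/2 + c')"
      using cond by linarith
    have mx': "\<forall>w'\<in>V. tanc p r w' v \<and> tanc p r w' u \<longrightarrow> tdepth p r w' \<le> tdepth p r w" using mx by blast
    show "measure (coin_space \<alpha> \<beta>)
           {\<omega> \<in> space (coin_space \<alpha> \<beta>). origin V r p rk \<omega> t u = origin V r p rk \<omega> t v}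
         \<le> exp (- \<eta> * ?s powr (2 * c'))"
    proof (cases "tdepth p r v - ?D \<le> tdepth p r u - ?D")
      case True
      hence "real (tdepth p r u - ?D) > \<beta> * ?s + K * ?s powr (1/2 + c')" using cond' by (simp add: max_def)
      thus ?thesis using main_sym[OF assms(1-4) c'(1,2) K_def[unfolded \<eta>_def] bfs lf inj uV vV du wu wv mx s1]
        unfolding \<eta>_def by simp
    next
      case False
      hence "real (tdepth p r v - ?D) > \<beta> * ?s + K * ?s powr (1/2 + c')" using cond' by (simp add: max_def)
      hence "measure (coin_space \<alpha> \<beta>)
           {\<omega> \<in> space (coin_space \<alpha> \<beta>). origin V r p rk \<omega> t v = origin V r p rk \<omega> t u}
         \<le> exp (- \<eta> * ?s powr (2 * c'))"
        using main_sym[OF assms(1-4) c'(1,2) K_def[unfolded \<eta>_def] bfs lf inj vV uV dv wv wu mx' s1]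
        unfolding \<eta>_def by simp
      moreover have "{\<omega> \<in> space (coin_space \<alpha> \<beta>). origin V r p rk \<omega> t v = origin V r p rk \<omega> t u}
         = {\<omega> \<in> space (coin_space \<alpha> \<beta>). origin V r p rk \<omega> t u = origin V r p rk \<omega> t v}" by auto
      ultimately show ?thesis by simp
    qed
  qed
qed


end
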